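(* $$\lim_{k \to \infty} \sum_{n=0}^{\infty} (-1)^n \frac{1}{n!}\left\langle {n \atop k} \right\rangle = 0,$$ where the limit is over nonnegative integers $k$.
   Context: For integers $n,k\ge 0$, the Eulerian number $\left\langle {n \atop k} \right\rangle$ is the number of permutations of $\{1,\ldots,n\}$ with exactly $k$ ascents (positions $i$ with $\sigma(i)<\sigma(i+1)$), with $\left\langle {0 \atop 0} \right\rangle=1$ and $\left\langle {0 \atop k} \right\rangle=0$ for $k\ge1$; in particular $\left\langle {n \atop k} \right\rangle=0$ when $n<k$. *)

theory Defs
  imports Complex_Main "HOL-Combinatorics.Permutations"
begin

definition ascents :: "nat \<Rightarrow> (nat \<Rightarrow> nat) \<Rightarrow> nat" where
  "ascents n \<sigma> = card {i \<in> {1..<n}. \<sigma> i < \<sigma> (Suc i)}"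

definition eulerian :: "nat \<Rightarrow> nat \<Rightarrow> nat" where
  "eulerian n k = card {\<sigma>. \<sigma> permutes {1..n} \<and> ascents n \<sigma> = k}"

end

theory Submission
  imports Defs "HOL-Computational_Algebra.Formal_Power_Series"
begin

definition ins :: "nat \<Rightarrow> (nat \<Rightarrow> nat) \<Rightarrow> nat \<Rightarrow> nat \<Rightarrow> nat" where
  "ins n \<tau> p i = (if i < p then \<tau> i else if i = p then Suc n else if i \<le> Suc n then \<tau> (i - 1) else i)"

lemma perm_facts:
  assumes "\<tau> permutes {1..n}"
  shows "\<And>i. i \<in> {1..n} \<Longrightarrow> \<tau> i \<in> {1..n}" "\<And>i. i \<notin> {1..n} \<Longrightarrow> \<tau> i = i"
    "\<And>i j. \<tau> i = \<tau> j \<Longrightarrow> i = j"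
  using assms permutes_in_image permutes_not_in apply (metis, metis)
  using assms permutes_inj by (metis injD)

lemma ins_permutes:
  assumes "\<tau> permutes {1..n}" "p \<in> {1..Suc n}"
  shows "ins n \<tau> p permutes {1..Suc n}"
proof (rule bij_imp_permutes)
  note f = perm_facts[OF assms(1)]
  have inj: "inj_on (ins n \<tau> p) {1..Suc n}"
  proof (rule inj_onI)
    fix x y assume x: "x \<in> {1..Suc n}" and y: "y \<in> {1..Suc n}" and e: "ins n \<tau> p x = ins n \<tau> p y"
    have r1: "\<And>i. i \<le> n \<Longrightarrow> \<tau> i \<le> n" 
    proof -
      fix i :: nat assume "i \<le> n"
      show "\<tau> i \<le> n" proof (cases "i = 0")
        case True then show ?thesis using f(2)[of 0] by simp
      next
        case False then show ?thesis using f(1)[of i] \<open>i \<le> n\<close> by simp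
      qed
    qed
    have c: "x < p \<or> x = p \<or> (x > p \<and> x - 1 \<le> n)" "y < p \<or> y = p \<or> (y > p \<and> y - 1 \<le> n)" using x y by auto
    show "x = y"
      using c
    proof (elim disjE conjE)
    qed (use e x y assms(2) r1[of x] r1[of "y-1"] r1[of "x-1"] r1[of y] f(3)[of x y] f(3)[of x "y-1"] f(3)[of "x-1" "y-1"] f(3)[of "x-1" y] in \<open>auto simp: ins_def\<close>)
  qed
  have sub: "ins n \<tau> p ` {1..Suc n} \<subseteq> {1..Suc n}"
  proof
    fix y assume "y \<in> ins n \<tau> p ` {1..Suc n}"
    then obtain x where x: "x \<in> {1..Suc n}" "y = ins n \<tau> p x" by auto
    have c: "x < p \<or> x = p \<or> (x > p \<and> x - 1 \<le> n \<and> 1 \<le> x - 1)" using x assms(2) by auto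
    show "y \<in> {1..Suc n}"
      using c
    proof (elim disjE conjE)
    qed (use x assms(2) f(1)[of x] f(1)[of "x-1"] in \<open>auto simp: ins_def\<close>)
  qed
  show "bij_betw (ins n \<tau> p) {1..Suc n} {1..Suc n}"
    unfolding bij_betw_def using inj sub endo_inj_surj[OF _ sub inj] by auto
  show "\<And>x. x \<notin> {1..Suc n} \<Longrightarrow> ins n \<tau> p x = x"
    using assms(2) f(2) unfolding ins_def by auto
qed

lemma ins_at: "p \<le> Suc n \<Longrightarrow> ins n \<tau> p p = Suc n" by (simp add: ins_def)

lemma ins_ne:
  assumes "\<tau> permutes {1..n}" "p \<in> {1..Suc n}" "i \<noteq> p"
  shows "ins n \<tau> p i \<noteq> Suc n"
proof -
  note f = perm_facts[OF assms(1)]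
  have r1: "\<And>i. i \<le> n \<Longrightarrow> \<tau> i \<le> n"
  proof -
    fix i :: nat assume "i \<le> n"
    show "\<tau> i \<le> n" proof (cases "i = 0")
      case True then show ?thesis using f(2)[of 0] by simp
    next
      case False then show ?thesis using f(1)[of i] \<open>i \<le> n\<close> by simp
    qed
  qed
  have c: "i < p \<or> (i > p \<and> i \<le> Suc n \<and> i - 1 \<le> n) \<or> i > Suc n" using assms by auto
  then show ?thesis
  proof (elim disjE conjE)
  qed (use assms r1[of i] r1[of "i - 1"] in \<open>auto simp: ins_def\<close>)
qed

lemma ins_inj: "inj_on (\<lambda>(\<tau>, p). ins n \<tau> p) ({\<tau>. \<tau> permutes {1..n}} \<times> {1..Suc n})"
proof (rule inj_onI, clarify)
  fix \<tau> p \<tau>' p'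
  assume t: "\<tau> permutes {1..n}" "\<tau>' permutes {1..n}" and p: "p \<in> {1..Suc n}" "p' \<in> {1..Suc n}"
    and e: "ins n \<tau> p = ins n \<tau>' p'"
  have pp: "p = p'"
  proof (rule ccontr)
    assume "p \<noteq> p'"
    then have "ins n \<tau>' p' p \<noteq> Suc n" using ins_ne[OF t(2) p(2)] by auto
    moreover have "ins n \<tau> p p = Suc n" using p by (simp add: ins_def)
    ultimately show False using e by simp
  qed
  have "\<tau> i = \<tau>' i" for i
  proof -
    consider "i < p" | "p \<le> i" "i \<le> n" | "i > n" by linarith
    then show ?thesis
    proof cases
      case 1 then show ?thesis using fun_cong[OF e, of i] pp by (simp add: ins_def)
    next
      case 2 then show ?thesis using fun_cong[OF e, of "Suc i"] pp by (simp add: ins_def)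
    next
      case 3 then show ?thesis using perm_facts(2)[OF t(1), of i] perm_facts(2)[OF t(2), of i] by simp
    qed
  qed
  then show "\<tau> = \<tau>' \<and> p = p'" using pp by auto
qed

lemma ins_image: "(\<lambda>(\<tau>, p). ins n \<tau> p) ` ({\<tau>. \<tau> permutes {1..n}} \<times> {1..Suc n}) = {\<sigma>. \<sigma> permutes {1..Suc n}}"
proof (rule card_subset_eq)
  show "finite {\<sigma>. \<sigma> permutes {1..Suc n}}" by (simp add: finite_permutations)
  show "(\<lambda>(\<tau>, p). ins n \<tau> p) ` ({\<tau>. \<tau> permutes {1..n}} \<times> {1..Suc n}) \<subseteq> {\<sigma>. \<sigma> permutes {1..Suc n}}"
    using ins_permutes by auto
  have "card ((\<lambda>(\<tau>, p). ins n \<tau> p) ` ({\<tau>. \<tau> permutes {1..n}} \<times> {1..Suc n})) = fact n * Suc n"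
    unfolding card_image[OF ins_inj] card_cartesian_product by (simp add: card_permutations)
  also have "\<dots> = card {\<sigma>. \<sigma> permutes {1..Suc n}}" by (simp add: card_permutations)
  finally show "card ((\<lambda>(\<tau>, p). ins n \<tau> p) ` ({\<tau>. \<tau> permutes {1..n}} \<times> {1..Suc n})) = card {\<sigma>. \<sigma> permutes {1..Suc n}}" .
qed

lemma perm_le:
  fixes n i :: nat
  assumes "\<tau> permutes {1..n}" "i \<le> n" shows "\<tau> i \<le> n"
proof (cases "i = 0")
  case True then show ?thesis using perm_facts(2)[OF assms(1), of 0] by simp
next
  case False then show ?thesis using perm_facts(1)[OF assms(1), of i] assms(2) by simp
qed

lemma ins_ascents:
  assumes t: "\<tau> permutes {1..n}" and p: "p \<in> {1..Suc n}"
  shows "ascents (Suc n) (ins n \<tau> p) =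
    (if 2 \<le> p \<and> \<not>(p \<le> n \<and> \<tau> (p-1) < \<tau> p) then Suc (ascents n \<tau>) else ascents n \<tau>)"
proof -
  define \<sigma> where "\<sigma> = ins n \<tau> p"
  define A where "A = {i\<in>{1..<n}. \<tau> i < \<tau> (Suc i)}"
  define A' where "A' = {i\<in>{1..<Suc n}. \<sigma> i < \<sigma> (Suc i)}"
  define L where "L = {i\<in>A. Suc i < p}"
  define R where "R = {i\<in>A. p \<le> i}"
  define M where "M = {i\<in>A. Suc i = p}"
  define M' where "M' = (if 2 \<le> p then {p - 1} else {})"
  have fin: "finite L" "finite R" "finite M" "finite M'" unfolding L_def R_def M_def M'_def A_def by auto
  have A_eq: "A = L \<union> M \<union> R" unfolding L_def R_def M_def by auto
  have A'_eq: "A' = L \<union> M' \<union> Suc ` R"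
  proof (intro equalityI subsetI)
    fix i assume "i \<in> A'"
    then have i: "1 \<le> i" "i \<le> n" "\<sigma> i < \<sigma> (Suc i)" unfolding A'_def by auto
    consider "Suc i < p" | "Suc i = p" | "i = p" | "i > p" by linarith
    then show "i \<in> L \<union> M' \<union> Suc ` R"
    proof cases
      case 1 then show ?thesis using i p unfolding L_def A_def \<sigma>_def ins_def by auto
    next
      case 2 then show ?thesis using i unfolding M'_def by auto
    next
      case 3 then show ?thesis using i perm_le[OF t, of p] unfolding \<sigma>_def ins_def by auto
    next
      case 4
      then have "i - 1 \<in> R" using i p unfolding R_def A_def \<sigma>_def ins_def by auto
      moreover have "i = Suc (i - 1)" using 4 by simp
      ultimately show ?thesis by blast
    qed
  next
    fix i assume "i \<in> L \<union> M' \<union> Suc ` R"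
    then consider "i \<in> L" | "i \<in> M'" | "i \<in> Suc ` R" by blast
    then show "i \<in> A'"
    proof cases
      case 1 then show ?thesis unfolding L_def A_def A'_def \<sigma>_def ins_def by auto
    next
      case 2
      then have i: "2 \<le> p" "i = p - 1" unfolding M'_def by (auto split: if_splits)
      then have "\<sigma> i = \<tau> (p - 1)" "\<sigma> (Suc i) = Suc n" using p unfolding \<sigma>_def ins_def by auto
      moreover have "\<tau> (p - 1) \<le> n" using perm_le[OF t, of "p - 1"] p by auto
      ultimately show ?thesis using i p unfolding A'_def by auto
    next
      case 3
      then obtain j where j: "j \<in> R" "i = Suc j" by blast
      then have "1 \<le> j" "j < n" "p \<le> j" "\<tau> j < \<tau> (Suc j)" unfolding R_def A_def by auto
      then show ?thesis using j(2) unfolding A'_def \<sigma>_def ins_def by auto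
    qed
  qed
  have d1: "L \<inter> M = {}" "(L \<union> M) \<inter> R = {}" unfolding L_def M_def R_def by auto
  have d2: "L \<inter> M' = {}" "(L \<union> M') \<inter> Suc ` R = {}" unfolding L_def M'_def R_def by auto
  have cA: "card A = card L + card M + card R"
    unfolding A_eq using fin d1 by (simp add: card_Un_disjoint)
  have cA': "card A' = card L + card M' + card R"
    unfolding A'_eq using fin d2 by (simp add: card_Un_disjoint card_image)
  have cM: "card M = (if 2 \<le> p \<and> p \<le> n \<and> \<tau> (p-1) < \<tau> p then 1 else 0)"
  proof (cases "2 \<le> p \<and> p \<le> n \<and> \<tau> (p-1) < \<tau> p")
    case True
    then have "M = {p - 1}" unfolding M_def A_def by auto
    then show ?thesis using True by simp
  next
    case False
    then have "M = {}" unfolding M_def A_def by auto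
    then show ?thesis using False by simp
  qed
  have cM': "card M' = (if 2 \<le> p then 1 else 0)" unfolding M'_def by simp
  have "ascents (Suc n) (ins n \<tau> p) = card A'" unfolding ascents_def A'_def \<sigma>_def by simp
  moreover have "ascents n \<tau> = card A" unfolding ascents_def A_def by simp
  ultimately show ?thesis using cA cA' cM cM' by auto
qed

lemma ascents_le: "ascents n \<tau> \<le> n - 1"
proof -
  have "ascents n \<tau> \<le> card {1..<n}" unfolding ascents_def by (rule card_mono) auto
  then show ?thesis by simp
qed


lemma count_p:
  assumes t: "\<tau> permutes {1..n}"
  shows "card {p\<in>{1..Suc n}. ascents (Suc n) (ins n \<tau> p) = k} =
    (if k = ascents n \<tau> then Suc (ascents n \<tau>) else if k = Suc (ascents n \<tau>) then n - ascents n \<tau> else 0)"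
proof -
  define A where "A = {i\<in>{1..<n}. \<tau> i < \<tau> (Suc i)}"
  define Keep where "Keep = {p\<in>{1..Suc n}. \<not>(2 \<le> p \<and> \<not>(p \<le> n \<and> \<tau> (p-1) < \<tau> p))}"
  have aA: "ascents n \<tau> = card A" unfolding ascents_def A_def by simp
  have Keep_eq: "Keep = insert 1 (Suc ` A)"
  proof (intro equalityI subsetI)
    fix p assume "p \<in> Keep"
    then have "p = 1 \<or> (2 \<le> p \<and> p \<le> n \<and> \<tau> (p-1) < \<tau> p)" unfolding Keep_def by auto
    then show "p \<in> insert 1 (Suc ` A)"
    proof
      assume h: "2 \<le> p \<and> p \<le> n \<and> \<tau> (p-1) < \<tau> p"
      then have "p - 1 \<in> A" "p = Suc (p - 1)" unfolding A_def by auto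
      then show ?thesis by blast
    qed simp
  next
    fix p assume "p \<in> insert 1 (Suc ` A)"
    then show "p \<in> Keep" unfolding Keep_def A_def by auto
  qed
  have finA: "finite A" unfolding A_def by simp
  have cK: "card Keep = Suc (card A)"
  proof -
    have n1: "1 \<notin> Suc ` A" unfolding A_def by auto
    have "card (Suc ` A) = card A" by (rule card_image) simp
    then show ?thesis unfolding Keep_eq using finA n1 by simp
  qed
  have KS: "Keep \<subseteq> {1..Suc n}" unfolding Keep_def by auto
  have cKc: "card ({1..Suc n} - Keep) = n - card A"
    using card_Diff_subset[OF finite_subset[OF KS] KS] cK by simp
  define cnd where "cnd p = (2 \<le> p \<and> \<not>(p \<le> n \<and> \<tau> (p-1) < \<tau> p))" for p
  have KK: "Keep = {p\<in>{1..Suc n}. \<not> cnd p}" unfolding Keep_def cnd_def by simp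
  have ia: "\<And>p. p \<in> {1..Suc n} \<Longrightarrow> ascents (Suc n) (ins n \<tau> p) = (if cnd p then Suc (ascents n \<tau>) else ascents n \<tau>)"
    using ins_ascents[OF t] unfolding cnd_def by simp
  have S_eq: "{p\<in>{1..Suc n}. ascents (Suc n) (ins n \<tau> p) = k} =
     (if k = ascents n \<tau> then Keep else if k = Suc (ascents n \<tau>) then {1..Suc n} - Keep else {})"
  proof -
    have "{p\<in>{1..Suc n}. ascents (Suc n) (ins n \<tau> p) = k} = {p\<in>{1..Suc n}. (if cnd p then Suc (ascents n \<tau>) else ascents n \<tau>) = k}"
      by (rule Collect_cong) (use ia in auto)
    moreover have "{p\<in>{1..Suc n}. (if cnd p then Suc (ascents n \<tau>) else ascents n \<tau>) = k} =
     (if k = ascents n \<tau> then Keep else if k = Suc (ascents n \<tau>) then {1..Suc n} - Keep else {})"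
    proof (cases "k = ascents n \<tau>")
      case True then show ?thesis unfolding KK by auto
    next
      case False
      show ?thesis
      proof (cases "k = Suc (ascents n \<tau>)")
        case True then show ?thesis using False unfolding KK by auto
      next
        case False2: False
        then show ?thesis using False by auto
      qed
    qed
    ultimately show ?thesis by simp
  qed
  show ?thesis
  proof (cases "k = ascents n \<tau>")
    case True then show ?thesis unfolding S_eq using cK aA by simp
  next
    case False then show ?thesis unfolding S_eq using cKc aA by simp
  qed
qed



lemma sum_ind: "finite A \<Longrightarrow> (\<Sum>x\<in>A. if P x then c else (0::nat)) = card {x\<in>A. P x} * c"
  using sum.inter_filter[of A "\<lambda>_. c" P] by simp

lemma eulerian_Suc:
  "eulerian (Suc n) k = Suc k * eulerian n k + (if k = 0 then 0 else (Suc n - k) * eulerian n (k - 1))"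
proof -
  let ?f = "\<lambda>(\<tau>, p). ins n \<tau> p"
  let ?P = "{\<tau>. \<tau> permutes {1..n}}"
  let ?D = "SIGMA \<tau>:?P. {p\<in>{1..Suc n}. ascents (Suc n) (ins n \<tau> p) = k}"
  have finP: "finite ?P" by (simp add: finite_permutations)
  have eq: "{\<sigma>. \<sigma> permutes {1..Suc n} \<and> ascents (Suc n) \<sigma> = k} = ?f ` ?D"
  proof (intro equalityI subsetI)
    fix \<sigma> assume s: "\<sigma> \<in> {\<sigma>. \<sigma> permutes {1..Suc n} \<and> ascents (Suc n) \<sigma> = k}"
    then have "\<sigma> \<in> ?f ` (?P \<times> {1..Suc n})" using ins_image[of n] by auto
    then obtain \<tau> p where tp: "\<tau> \<in> ?P" "p \<in> {1..Suc n}" "\<sigma> = ins n \<tau> p" by auto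
    then have "(\<tau>, p) \<in> ?D" using s by auto
    then show "\<sigma> \<in> ?f ` ?D" using tp(3) by force
  next
    fix \<sigma> assume "\<sigma> \<in> ?f ` ?D"
    then obtain \<tau> p where tp: "\<tau> \<in> ?P" "p \<in> {1..Suc n}" "\<sigma> = ins n \<tau> p" "ascents (Suc n) (ins n \<tau> p) = k" by auto
    then show "\<sigma> \<in> {\<sigma>. \<sigma> permutes {1..Suc n} \<and> ascents (Suc n) \<sigma> = k}" using ins_permutes by auto
  qed
  have inj: "inj_on ?f ?D" by (rule inj_on_subset[OF ins_inj]) auto
  have "eulerian (Suc n) k = card ?D" by (simp only: eulerian_def eq card_image[OF inj])
  also have "\<dots> = (\<Sum>\<tau>\<in>?P. card {p\<in>{1..Suc n}. ascents (Suc n) (ins n \<tau> p) = k})"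
    using finP by (intro card_SigmaI) auto
  also have "\<dots> = (\<Sum>\<tau>\<in>?P. (if ascents n \<tau> = k then Suc k else 0) +
        (if Suc (ascents n \<tau>) = k then Suc n - k else 0))"
  proof (rule sum.cong[OF refl])
    fix \<tau> assume "\<tau> \<in> ?P"
    then have c: "card {p\<in>{1..Suc n}. ascents (Suc n) (ins n \<tau> p) = k} =
      (if k = ascents n \<tau> then Suc (ascents n \<tau>) else if k = Suc (ascents n \<tau>) then n - ascents n \<tau> else 0)"
      using count_p by blast
    show "card {p\<in>{1..Suc n}. ascents (Suc n) (ins n \<tau> p) = k} = (if ascents n \<tau> = k then Suc k else 0) +
        (if Suc (ascents n \<tau>) = k then Suc n - k else 0)"
      unfolding c by auto
  qed
  also have "\<dots> = (\<Sum>\<tau>\<in>?P. if ascents n \<tau> = k then Suc k else 0) +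
        (\<Sum>\<tau>\<in>?P. if Suc (ascents n \<tau>) = k then Suc n - k else 0)"
    by (rule sum.distrib)
  also have "(\<Sum>\<tau>\<in>?P. if ascents n \<tau> = k then Suc k else 0) = Suc k * eulerian n k"
    unfolding sum_ind[OF finP] eulerian_def by (simp add: mult.commute)
  also have "(\<Sum>\<tau>\<in>?P. if Suc (ascents n \<tau>) = k then Suc n - k else 0) =
      (if k = 0 then 0 else (Suc n - k) * eulerian n (k - 1))"
  proof (cases k)
    case 0 then show ?thesis by simp
  next
    case (Suc k')
    have e: "{x\<in>?P. Suc (ascents n x) = k} = {\<sigma>. \<sigma> permutes {1..n} \<and> ascents n \<sigma> = k'}" using Suc by auto
    show ?thesis unfolding sum_ind[OF finP] e eulerian_def using Suc by (simp add: mult.commute)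
  qed
  finally show ?thesis .
qed


lemma eulerian_0: "eulerian 0 k = (if k = 0 then 1 else 0)"
proof -
  have z: "{1..(0::nat)} = {}" by simp
  have a: "ascents 0 id = 0" unfolding ascents_def by simp
  have "{\<sigma>. \<sigma> permutes {1..(0::nat)} \<and> ascents 0 \<sigma> = k} = {\<sigma>. \<sigma> = id \<and> ascents 0 \<sigma> = k}"
    unfolding z permutes_empty by simp
  also have "\<dots> = (if k = 0 then {id} else {})" using a by auto
  finally show ?thesis unfolding eulerian_def by simp
qed

lemma eulerian_big: "n < k \<Longrightarrow> eulerian n k = 0"
proof -
  assume nk: "n < k"
  have "ascents n \<sigma> \<noteq> k" for \<sigma> using ascents_le[of n \<sigma>] nk by linarith
  then have "{\<sigma>. \<sigma> permutes {1..n} \<and> ascents n \<sigma> = k} = {}" by auto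
  then show ?thesis unfolding eulerian_def by (simp only: card.empty)
qed



definition T :: "nat \<Rightarrow> nat \<Rightarrow> real" where
  "T n k = (\<Sum>j\<le>k. (-1)^j * real (Suc n choose j) * real (Suc k - j) ^ n)"

lemma binom_id: "real (Suc i) * real (N choose Suc i) = (real N - real i) * real (N choose i)"
proof (cases "i < N")
  case True
  have "Suc i * (N choose Suc i) = N * ((N - 1) choose i)"
    using Suc_times_binomial[of i "N - 1"] True by simp
  moreover have "(N - i) * (N choose i) = N * ((N - 1) choose i)" by (rule binomial_absorb_comp)
  ultimately have "Suc i * (N choose Suc i) = (N - i) * (N choose i)" by simp
  then have "real (Suc i * (N choose Suc i)) = real ((N - i) * (N choose i))" by simp
  then show ?thesis using True by (simp only: of_nat_mult of_nat_diff[OF less_imp_le[OF True]])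
next
  case False
  then show ?thesis by (cases "i = N") (auto simp: binomial_eq_0)
qed

lemma alg_aux:
  fixes K i N1 c0 c1 M s :: real
  assumes "M = K - i"
  shows "(1 + K) * ((- s) * c1 * M ^ n) + (N1 - K) * (s * c0 * M ^ n)
     - (- s) * (c0 + c1) * M ^ Suc n = s * M ^ n * ((N1 - i) * c0 - (1 + i) * c1)"
  unfolding power_Suc assms by (simp add: algebra_simps)

lemma T_0k: "T n 0 = 1" unfolding T_def by simp

lemma T_n0: "T 0 k = (if k = 0 then 1 else 0)"
proof (cases k)
  case 0 then show ?thesis by (simp add: T_def)
next
  case (Suc k')
  have "T 0 k = (\<Sum>j\<le>Suc k'. (-1)^j * real (Suc 0 choose j))" unfolding T_def Suc by simp
  also have "\<dots> = 1 + (\<Sum>i\<le>k'. (-1)^Suc i * real (Suc 0 choose Suc i))" by (subst sum.atMost_Suc_shift) simp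
  also have "(\<Sum>i\<le>k'. (-1)^Suc i * real (Suc 0 choose Suc i)) = (\<Sum>i\<le>k'. if i = 0 then -1 else 0)"
    by (rule sum.cong) auto
  also have "\<dots> = -1" by simp
  finally show ?thesis using Suc by simp
qed

lemma T_rec: "T (Suc n) (Suc k) = real (Suc (Suc k)) * T n (Suc k) + (real (Suc n) - real (Suc k)) * T n k"
proof -
  define K where "K = Suc k"
  define m where "m j = real (Suc K - j)" for j
  have mS: "m (Suc i) = real (Suc k - i)" for i unfolding m_def K_def by simp
  have m0: "m 0 = real (Suc K)" unfolding m_def by simp
  have mSi: "i \<le> k \<Longrightarrow> m (Suc i) = real K - real i" for i unfolding m_def K_def by (simp add: of_nat_diff)
  have L: "T (Suc n) K = m 0 ^ Suc n + (\<Sum>i\<le>k. (-1)^Suc i * (real (Suc n choose i) + real (Suc n choose Suc i)) * m (Suc i) ^ Suc n)"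
    unfolding T_def K_def m_def by (subst sum.atMost_Suc_shift) simp
  have R1: "T n K = m 0 ^ n + (\<Sum>i\<le>k. (-1)^Suc i * real (Suc n choose Suc i) * m (Suc i) ^ n)"
    unfolding T_def K_def m_def by (subst sum.atMost_Suc_shift) simp
  have R2: "T n k = (\<Sum>i\<le>k. (-1)^i * real (Suc n choose i) * m (Suc i) ^ n)"
    unfolding T_def mS by simp
  have "real (Suc K) * T n K + (real (Suc n) - real K) * T n k =
      real (Suc K) * m 0 ^ n + (\<Sum>i\<le>k. real (Suc K) * ((-1)^Suc i * real (Suc n choose Suc i) * m (Suc i) ^ n)
        + (real (Suc n) - real K) * ((-1)^i * real (Suc n choose i) * m (Suc i) ^ n))"
    by (simp only: R1 R2 distrib_left sum_distrib_left sum.distrib add.assoc)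
  also have "\<dots> = m 0 ^ Suc n + (\<Sum>i\<le>k. (-1)^Suc i * (real (Suc n choose i) + real (Suc n choose Suc i)) * m (Suc i) ^ Suc n)"
  proof -
    have h0: "real (Suc K) * m 0 ^ n = m 0 ^ Suc n" using m0 by simp
    have hi: "real (Suc K) * ((-1)^Suc i * real (Suc n choose Suc i) * m (Suc i) ^ n)
        + (real (Suc n) - real K) * ((-1)^i * real (Suc n choose i) * m (Suc i) ^ n) =
        (-1)^Suc i * (real (Suc n choose i) + real (Suc n choose Suc i)) * m (Suc i) ^ Suc n" if "i \<le> k" for i
    proof -
      have b: "real (Suc i) * real (Suc n choose Suc i) = (real (Suc n) - real i) * real (Suc n choose i)"
        by (rule binom_id)
      define c0 where "c0 = real (Suc n choose i)"
      define c1 where "c1 = real (Suc n choose Suc i)"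
      define M where "M = m (Suc i)"
      define s where "s = ((-1::real)^i)"
      have A: "(1 + real K) * ((- s) * c1 * M ^ n) + (real (Suc n) - real K) * (s * c0 * M ^ n)
         - (- s) * (c0 + c1) * M ^ Suc n = s * M ^ n * ((real (Suc n) - real i) * c0 - (1 + real i) * c1)"
        by (rule alg_aux) (simp add: M_def mSi[OF that])
      have z: "(real (Suc n) - real i) * c0 - (1 + real i) * c1 = 0"
        unfolding c0_def c1_def of_nat_Suc[of i, symmetric] b by simp
      have "(1 + real K) * ((- s) * c1 * M ^ n) + (real (Suc n) - real K) * (s * c0 * M ^ n)
         = (- s) * (c0 + c1) * M ^ Suc n" using A z by simp
      moreover have "(-1::real)^Suc i = - s" unfolding s_def by simp
      ultimately show ?thesis unfolding c0_def c1_def M_def s_def by simp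
    qed
    have "(\<Sum>i\<le>k. real (Suc K) * ((-1)^Suc i * real (Suc n choose Suc i) * m (Suc i) ^ n)
        + (real (Suc n) - real K) * ((-1)^i * real (Suc n choose i) * m (Suc i) ^ n)) =
       (\<Sum>i\<le>k. (-1)^Suc i * (real (Suc n choose i) + real (Suc n choose Suc i)) * m (Suc i) ^ Suc n)"
      by (rule sum.cong[OF refl]) (rule hi, simp)
    then show ?thesis by (simp only: h0)
  qed
  finally show ?thesis using L unfolding K_def by simp
qed

lemma E_eq_T: "real (eulerian n k) = T n k"
proof (induction n arbitrary: k)
  case 0 then show ?case by (simp add: eulerian_0 T_n0)
next
  case (Suc n)
  show ?case
  proof (cases k)
    case 0 then show ?thesis using Suc eulerian_Suc[of n 0] by (simp add: T_0k)
  next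
    case (Suc k')
    have e: "eulerian (Suc n) (Suc k') = Suc (Suc k') * eulerian n (Suc k') + (Suc n - Suc k') * eulerian n k'"
      using eulerian_Suc[of n "Suc k'"] by simp
    have "real ((Suc n - Suc k') * eulerian n k') = (real (Suc n) - real (Suc k')) * real (eulerian n k')"
    proof (cases "Suc k' \<le> Suc n")
      case True then show ?thesis by (simp add: of_nat_diff)
    next
      case False then show ?thesis using eulerian_big[of n k'] by simp
    qed
    note d = this
    have "real (eulerian (Suc n) (Suc k')) = real (Suc (Suc k')) * real (eulerian n (Suc k')) + real ((Suc n - Suc k') * eulerian n k')"
      unfolding e by (simp only: of_nat_add of_nat_mult)
    also have "\<dots> = real (Suc (Suc k')) * T n (Suc k') + (real (Suc n) - real (Suc k')) * T n k'"
      by (simp only: d Suc.IH)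
    also have "\<dots> = T (Suc n) (Suc k')" by (rule T_rec[symmetric])
    finally show ?thesis using Suc by simp
  qed
qed



lemma exp_sums_real: "(\<lambda>n. (y::real) ^ n / fact n) sums exp y"
  using exp_converges[of y] by (simp add: divide_inverse mult.commute)

lemma ser1: "(\<lambda>n. real (n choose j) * (y::real) ^ n / fact n) sums (y ^ j / fact j * exp y)"
proof -
  define f where "f n = real (n choose j) * y ^ n / fact n" for n
  have "(\<lambda>n. y ^ j / fact j * (y ^ n / fact n)) sums (y ^ j / fact j * exp y)"
    by (rule sums_mult[OF exp_sums_real])
  moreover have "f (n + j) = y ^ j / fact j * (y ^ n / fact n)" for n
  proof -
    have "real ((n + j) choose j) = fact (n + j) / (fact j * fact n)"
      using binomial_fact[of j "n + j"] by simp
    then show ?thesis unfolding f_def by (simp add: power_add field_simps)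
  qed
  ultimately have "(\<lambda>n. f (n + j)) sums (y ^ j / fact j * exp y)" by simp
  then have "f sums (y ^ j / fact j * exp y + sum f {..<j})" by (simp add: sums_iff_shift)
  moreover have "sum f {..<j} = 0" unfolding f_def by (intro sum.neutral) (simp add: binomial_eq_0)
  ultimately show ?thesis unfolding f_def by simp
qed

lemma ser2: "(\<lambda>n. real (Suc n choose j) * (y::real) ^ n / fact n) sums
   (y ^ j / fact j * exp y + (if j = 0 then 0 else y ^ (j - 1) / fact (j - 1) * exp y))"
proof (cases j)
  case 0 then show ?thesis using ser1[of 0 y] by simp
next
  case (Suc i)
  have "(\<lambda>n. real (n choose Suc i) * y ^ n / fact n + real (n choose i) * y ^ n / fact n) sums
     (y ^ Suc i / fact (Suc i) * exp y + y ^ i / fact i * exp y)"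
    by (rule sums_add[OF ser1 ser1])
  then show ?thesis using Suc by (simp add: add_divide_distrib distrib_right add.commute)
qed

lemma g1: "(-1::real)^j * c * ((-1)^n * m^n) / f = (-1)^j * (c * (- m) ^ n / f)"
  by (simp add: power_minus[of m n])

lemma g2: "(-1::real)^j * ((- m) ^ j / f * e) = e * m ^ j / f"
proof -
  have h: "(-1::real)^j * (- m) ^ j = m ^ j"
  proof -
    have "(-1::real)^j * (- m) ^ j = ((-1) * (- m)) ^ j" by (rule power_mult_distrib[symmetric])
    then show ?thesis by simp
  qed
  have "(-1::real)^j * ((- m) ^ j / f * e) = ((-1)^j * (- m) ^ j) * e / f" by simp
  then show ?thesis unfolding h by simp
qed

lemma g3: "(-1::real)^Suc i * ((- m) ^ i / f * e) = - (e * m ^ i / f)"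
  using g2[of i m f e] by simp

definition U :: "nat \<Rightarrow> real" where
  "U k = (\<Sum>j\<le>k. exp (- real (Suc k - j)) * real (Suc k - j) ^ j / fact j)"

definition Aval :: "nat \<Rightarrow> real" where
  "Aval k = (\<Sum>j\<le>k. (-1)^j * ((- real (Suc k - j)) ^ j / fact j * exp (- real (Suc k - j)) +
      (if j = 0 then 0 else (- real (Suc k - j)) ^ (j - 1) / fact (j - 1) * exp (- real (Suc k - j)))))"

lemma a_sums: "(\<lambda>n. (-1::real) ^ n * real (eulerian n k) / fact n) sums Aval k"
proof -
  have "(\<lambda>n. \<Sum>j\<le>k. (-1)^j * (real (Suc n choose j) * (- real (Suc k - j)) ^ n / fact n)) sums Aval k"
    unfolding Aval_def by (intro sums_sum sums_mult ser2)
  moreover have "(\<Sum>j\<le>k. (-1)^j * (real (Suc n choose j) * (- real (Suc k - j)) ^ n / fact n)) =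
      (-1::real) ^ n * real (eulerian n k) / fact n" for n
  proof -
    have "(-1::real) ^ n * real (eulerian n k) / fact n = (\<Sum>j\<le>k. (-1)^j * real (Suc n choose j) * ((-1)^n * real (Suc k - j) ^ n)) / fact n"
      unfolding E_eq_T T_def by (simp add: sum_distrib_left algebra_simps)
    also have "\<dots> = (\<Sum>j\<le>k. (-1)^j * (real (Suc n choose j) * (- real (Suc k - j)) ^ n / fact n))"
      unfolding sum_divide_distrib by (rule sum.cong[OF refl]) (rule g1)
    finally show ?thesis by simp
  qed
  ultimately show ?thesis by simp
qed

lemma Aval_U: "Aval k = U k - (if k = 0 then 0 else U (k - 1))"
proof -
  have s1: "(\<Sum>j\<le>k. (-1)^j * ((- real (Suc k - j)) ^ j / fact j * exp (- real (Suc k - j)))) = U k"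
    unfolding U_def by (rule sum.cong[OF refl]) (rule g2)
  have s2: "(\<Sum>j\<le>k. (-1)^j * (if j = 0 then 0 else (- real (Suc k - j)) ^ (j - 1) / fact (j - 1) * exp (- real (Suc k - j))))
      = - (if k = 0 then 0 else U (k - 1))"
  proof (cases k)
    case 0 then show ?thesis by simp
  next
    case (Suc k')
    have "(\<Sum>j\<le>k. (-1)^j * (if j = 0 then 0 else (- real (Suc k - j)) ^ (j - 1) / fact (j - 1) * exp (- real (Suc k - j))))
       = (\<Sum>i\<le>k'. (-1)^Suc i * ((- real (Suc k' - i)) ^ i / fact i * exp (- real (Suc k' - i))))"
      unfolding Suc by (subst sum.atMost_Suc_shift) simp
    also have "\<dots> = - U k'"
      unfolding U_def sum_negf[symmetric] by (rule sum.cong[OF refl]) (rule g3)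
    finally show ?thesis using Suc by simp
  qed
  show ?thesis unfolding Aval_def distrib_left sum.distrib s1 s2 by simp
qed



definition E1 :: "real fps" where "E1 = fps_const (exp (-1)) * fps_exp 1"
definition Ei :: "real fps" where "Ei = fps_const (exp 1) * fps_exp (-1)"
definition B :: "real fps" where "B = fps_X * E1"
definition S :: "real fps" where "S = Abs_fps (\<lambda>N. \<Sum>m\<le>N. (fps_nth (B ^ m) N))"
definition W :: "real fps" where "W = E1 * S"
definition Kf :: "real fps" where "Kf = Abs_fps (\<lambda>n. \<Sum>i\<le>n. (fps_nth (Ei - fps_X) i))"
definition G :: "real fps" where "G = (1 - fps_X) * W"

lemma E1_Ei: "E1 * Ei = 1"
proof -
  have "E1 * Ei = fps_const (exp (-1) * exp 1) * (fps_exp 1 * fps_exp (-1))"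
    unfolding E1_def Ei_def by (simp add: ac_simps)
  also have "fps_exp 1 * fps_exp (-1) = (fps_exp (1 + (-1)) :: real fps)"
    by (rule fps_exp_add_mult[symmetric])
  also have "exp (-1) * exp 1 = (1::real)" by (simp add: exp_add[symmetric])
  finally show ?thesis by simp
qed

lemma B_pow: "B ^ m = fps_X ^ m * E1 ^ m"
  unfolding B_def by (simp add: power_mult_distrib)

lemma B_pow_nth: "N < m \<Longrightarrow> (fps_nth (B ^ m) N) = 0"
  unfolding B_pow by (simp add: fps_X_power_mult_nth)

lemma coeff_local:
  assumes "\<And>i. i \<le> N \<Longrightarrow> (fps_nth f i) = (fps_nth g i)"
  shows "(fps_nth (h * f) N) = (fps_nth (h * g) N)"
  unfolding fps_mult_nth using assms by (intro sum.cong) auto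

lemma S_local: "i \<le> N \<Longrightarrow> (fps_nth S i) = (fps_nth (\<Sum>m\<le>N. B ^ m) i)"
proof -
  assume iN: "i \<le> N"
  have "(fps_nth (\<Sum>m\<le>N. B ^ m) i) = (\<Sum>m\<le>N. (fps_nth (B ^ m) i))" by (simp add: fps_sum_nth)
  also have "\<dots> = (\<Sum>m\<le>i. (fps_nth (B ^ m) i))"
    by (rule sum.mono_neutral_right) (use iN B_pow_nth in auto)
  finally show ?thesis unfolding S_def by simp
qed

lemma S_inv: "S * (1 - B) = 1"
proof (rule fps_ext)
  fix N
  have "(fps_nth (S * (1 - B)) N) = (fps_nth ((1 - B) * S) N)" by (simp add: mult.commute)
  also have "\<dots> = (fps_nth ((1 - B) * (\<Sum>m\<le>N. B ^ m)) N)" by (rule coeff_local) (rule S_local)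
  also have "(1 - B) * (\<Sum>m\<le>N. B ^ m) = 1 - B ^ Suc N"
    using one_diff_power_eq[of B "Suc N"] by (simp add: lessThan_Suc_atMost)
  also have "(fps_nth (1 - B ^ Suc N) N) = (fps_nth 1 N)" using B_pow_nth[of N "Suc N"] by simp
  finally show "(fps_nth (S * (1 - B)) N) = (fps_nth 1 N)" .
qed

lemma W_inv: "W * (Ei - fps_X) = 1"
proof -
  have "W * (Ei - fps_X) = S * (E1 * Ei) - S * (fps_X * E1)" unfolding W_def by (simp add: algebra_simps)
  also have "\<dots> = S * (1 - B)" unfolding E1_Ei B_def by (simp add: algebra_simps)
  finally show ?thesis using S_inv by simp
qed

lemma Kf_mult: "(1 - fps_X) * Kf = Ei - fps_X"
proof (rule fps_ext)
  fix n
  have "(fps_nth ((1 - fps_X) * Kf) n) = (fps_nth Kf n) - (fps_nth (fps_X * Kf) n)" by (simp add: algebra_simps)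
  also have "\<dots> = (fps_nth (Ei - fps_X) n)"
  proof (cases n)
    case 0 then show ?thesis unfolding Kf_def by simp
  next
    case (Suc n') then show ?thesis unfolding Kf_def by simp
  qed
  finally show "(fps_nth ((1 - fps_X) * Kf) n) = (fps_nth (Ei - fps_X) n)" .
qed

lemma G_Kf: "G * Kf = 1"
proof -
  have "G * Kf = W * ((1 - fps_X) * Kf)" unfolding G_def by (simp add: ac_simps)
  then show ?thesis using Kf_mult W_inv by simp
qed

lemma G_nth: "(fps_nth G k) = (fps_nth W k) - (if k = 0 then 0 else (fps_nth W (k - 1)))"
proof -
  have h: "G = W - fps_X * W" unfolding G_def by (simp add: algebra_simps)
  show ?thesis unfolding h by (cases k) simp_all
qed

lemma E1_pow: "E1 ^ n = fps_const (exp (-1) ^ n) * fps_exp (real n)"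
  unfolding E1_def by (simp add: power_mult_distrib fps_exp_power_mult)

lemma sum_rev_atMost: "(\<Sum>j\<le>(k::nat). g j) = (\<Sum>m\<le>k. g (k - m))"
  by (rule sum.reindex_bij_witness[where i="\<lambda>m. k - m" and j="\<lambda>m. k - m"]) auto

lemma W_nth: "(fps_nth W k) = U k"
proof -
  have "(fps_nth W k) = (fps_nth (E1 * (\<Sum>m\<le>k. B ^ m)) k)" unfolding W_def by (rule coeff_local) (rule S_local)
  also have "\<dots> = (\<Sum>m\<le>k. (fps_nth (E1 * B ^ m) k))" by (simp add: sum_distrib_left fps_sum_nth)
  also have "\<dots> = (\<Sum>m\<le>k. exp (-1) ^ Suc m * real (Suc m) ^ (k - m) / fact (k - m))"
  proof (rule sum.cong[OF refl])
    fix m assume "m \<in> {..k}"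
    then have mk: "m \<le> k" by simp
    have "E1 * B ^ m = fps_X ^ m * E1 ^ Suc m" unfolding B_pow by (simp add: ac_simps)
    then show "(fps_nth (E1 * B ^ m) k) = exp (-1) ^ Suc m * real (Suc m) ^ (k - m) / fact (k - m)"
      using mk unfolding E1_pow by (simp add: fps_X_power_mult_nth)
  qed
  also have "\<dots> = U k"
  proof -
    have r: "U k = (\<Sum>m\<le>k. exp (- real (Suc k - (k - m))) * real (Suc k - (k - m)) ^ (k - m) / fact (k - m))"
      unfolding U_def by (rule sum_rev_atMost)
    show ?thesis unfolding r
    proof (rule sum.cong[OF refl])
      fix m assume "m \<in> {..k}"
      then have mk: "m \<le> k" by simp
      then have e: "Suc k - (k - m) = Suc m" by simp
      have "exp (- real (Suc m)) = exp (-1) ^ Suc m"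
        using exp_of_nat_mult[of "Suc m" "-1"] by simp
      then show "exp (-1) ^ Suc m * real (Suc m) ^ (k - m) / fact (k - m) =
        exp (- real (Suc k - (k - m))) * real (Suc k - (k - m)) ^ (k - m) / fact (k - m)"
        unfolding e by simp
    qed
  qed
  finally show ?thesis .
qed

lemma Aval_G: "Aval k = (fps_nth G k)"
  unfolding Aval_U G_nth W_nth by simp



lemma exp_taylor_neg1: "\<bar>(\<Sum>i\<le>n. (-1::real)^i / fact i) - exp (-1)\<bar> \<le> 1 / fact (Suc n)"
proof -
  obtain t where t: "-1 < t" "t < 0"
    and e: "exp (-1::real) = (\<Sum>m<Suc n. exp 0 / fact m * (-1) ^ m) + exp t / fact (Suc n) * (-1) ^ Suc n"
    using Maclaurin_minus[of "-1::real" "Suc n" "\<lambda>_. exp" exp] by (auto intro: DERIV_exp)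
  have "(\<Sum>i\<le>n. (-1::real)^i / fact i) = (\<Sum>m<Suc n. exp 0 / fact m * (-1) ^ m)"
    by (simp add: lessThan_Suc_atMost)
  then have "\<bar>(\<Sum>i\<le>n. (-1::real)^i / fact i) - exp (-1)\<bar> = \<bar>exp t / fact (Suc n) * (-1) ^ Suc n\<bar>"
    using e by simp
  also have "\<dots> = exp t / fact (Suc n)" by (simp add: abs_mult)
  also have "\<dots> \<le> 1 / fact (Suc n)"
    using t by (intro divide_right_mono) auto
  finally show ?thesis .
qed

lemma Kf_0: "fps_nth Kf 0 = exp 1"
  unfolding Kf_def Ei_def by simp

lemma Kf_nth: "n \<ge> 1 \<Longrightarrow> fps_nth Kf n = exp 1 * (\<Sum>i\<le>n. (-1::real)^i / fact i) - 1"
proof -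
  assume n: "n \<ge> 1"
  have "fps_nth Kf n = (\<Sum>i\<le>n. exp 1 * ((-1)^i / fact i) - (if i = 1 then 1 else 0))"
    unfolding Kf_def Ei_def by simp
  also have "\<dots> = exp 1 * (\<Sum>i\<le>n. (-1::real)^i / fact i) - (\<Sum>i\<le>n. if i = 1 then 1 else 0)"
    by (simp add: sum_subtractf sum_distrib_left)
  also have "(\<Sum>i\<le>n. if i = 1 then 1 else (0::real)) = 1" using n by (simp add: sum.delta)
  finally show ?thesis .
qed

lemma Kf_bound: "n \<ge> 1 \<Longrightarrow> \<bar>fps_nth Kf n\<bar> \<le> exp 1 / fact (Suc n)"
proof -
  assume n: "n \<ge> 1"
  have "fps_nth Kf n = exp 1 * ((\<Sum>i\<le>n. (-1::real)^i / fact i) - exp (-1))"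
    using Kf_nth[OF n] by (simp add: right_diff_distrib exp_minus)
  then have "\<bar>fps_nth Kf n\<bar> = exp 1 * \<bar>(\<Sum>i\<le>n. (-1::real)^i / fact i) - exp (-1)\<bar>"
    by (simp add: abs_mult)
  also have "\<dots> \<le> exp 1 * (1 / fact (Suc n))"
    by (intro mult_left_mono exp_taylor_neg1) simp
  finally show ?thesis by simp
qed

lemma G_rec: "k \<ge> 1 \<Longrightarrow> exp 1 * fps_nth G k = - (\<Sum>i<k. fps_nth G i * fps_nth Kf (k - i))"
proof -
  assume k: "k \<ge> 1"
  then obtain k' where k': "k = Suc k'" by (cases k) auto
  have "0 = fps_nth (G * Kf) k" using G_Kf k by simp
  also have "\<dots> = (\<Sum>i=0..k. fps_nth G i * fps_nth Kf (k - i))" by (rule fps_mult_nth)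
  also have "\<dots> = (\<Sum>i<k. fps_nth G i * fps_nth Kf (k - i)) + fps_nth G k * exp 1"
    unfolding k' by (simp add: sum.atLeast0_atMost_Suc atLeast0AtMost lessThan_Suc_atMost Kf_0)
  finally show ?thesis by (simp add: algebra_simps eq_neg_iff_add_eq_0)
qed

lemma fact_bound: "fact (Suc (Suc i)) \<ge> (2 * 3 ^ i :: real)"
proof (induction i)
  case 0 then show ?case by simp
next
  case (Suc i)
  have "fact (Suc (Suc (Suc i))) = real (Suc (Suc (Suc i))) * fact (Suc (Suc i))" by simp
  also have "\<dots> \<ge> 3 * (2 * 3 ^ i)"
    using Suc.IH by (intro mult_mono) auto
  finally show ?case by simp
qed

lemma geo_sum: "(\<Sum>i<k. (3/5::real) * (2/5)^i) = 1 - (2/5)^k"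
  by (induction k) (simp_all add: algebra_simps)

lemma weight_sum: "(\<Sum>i<k. (6/5::real) ^ Suc i / fact (Suc (Suc i))) \<le> 1"
proof -
  have "(\<Sum>i<k. (6/5::real) ^ Suc i / fact (Suc (Suc i))) \<le> (\<Sum>i<k. (3/5::real) * (2/5)^i)"
  proof (rule sum_mono)
    fix i
    have "(6/5::real) ^ Suc i / fact (Suc (Suc i)) \<le> (6/5) ^ Suc i / (2 * 3 ^ i)"
      using fact_bound[of i] by (intro divide_left_mono) auto
    also have "\<dots> = (3/5) * (2/5)^i"
    proof -
      have p: "(6/5::real)^i = 3^i * (2/5)^i" using power_mult_distrib[of "3::real" "2/5" i] by simp
      have "(6/5::real) ^ Suc i / (2 * 3 ^ i) = (6/5) * (3^i * (2/5)^i) / (2 * 3 ^ i)" using p by simp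
      also have "\<dots> = (3/5) * (2/5)^i" by simp
      finally show ?thesis .
    qed
    finally show "(6/5::real) ^ Suc i / fact (Suc (Suc i)) \<le> (3/5) * (2/5)^i" .
  qed
  also have "\<dots> \<le> 1" unfolding geo_sum by simp
  finally show ?thesis .
qed

lemma conv_sum: "(\<Sum>i<k. (5/6::real) ^ i / fact (Suc (k - i))) \<le> (5/6) ^ k"
proof -
  have "(\<Sum>i<k. (5/6::real) ^ i / fact (Suc (k - i))) = (\<Sum>i<k. (5/6::real) ^ (k - Suc i) / fact (Suc (k - (k - Suc i))))"
    by (rule sum.nat_diff_reindex[symmetric])
  also have "\<dots> = (\<Sum>i<k. (5/6) ^ k * ((6/5::real) ^ Suc i / fact (Suc (Suc i))))"
  proof (rule sum.cong[OF refl])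
    fix i assume "i \<in> {..<k}"
    then have ik: "i < k" by simp
    then have e: "Suc (k - (k - Suc i)) = Suc (Suc i)" by simp
    have kk: "k = (k - Suc i) + Suc i" using ik by simp
    have "(5/6::real) ^ k = (5/6) ^ (k - Suc i) * (5/6) ^ Suc i"
      by (subst kk) (rule power_add)
    moreover have "((5/6::real) * (6/5)) ^ Suc i = (5/6) ^ Suc i * (6/5) ^ Suc i" by (rule power_mult_distrib)
    then have "(5/6::real) ^ Suc i * (6/5) ^ Suc i = 1" by simp
    ultimately have "(5/6::real) ^ k * (6/5) ^ Suc i = (5/6) ^ (k - Suc i)"
      by (metis mult.assoc mult.right_neutral)
    then show "(5/6::real) ^ (k - Suc i) / fact (Suc (k - (k - Suc i))) = (5/6) ^ k * ((6/5::real) ^ Suc i / fact (Suc (Suc i)))"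
      unfolding e by simp
  qed
  also have "\<dots> = (5/6) ^ k * (\<Sum>i<k. (6/5::real) ^ Suc i / fact (Suc (Suc i)))"
    by (simp add: sum_distrib_left)
  also have "\<dots> \<le> (5/6) ^ k * 1"
    by (intro mult_left_mono weight_sum) simp
  finally show ?thesis by simp
qed

lemma G_decay: "\<bar>fps_nth G k\<bar> \<le> \<bar>fps_nth G 0\<bar> * (5/6) ^ k"
proof (induction k rule: less_induct)
  case (less k)
  show ?case
  proof (cases "k = 0")
    case True then show ?thesis by simp
  next
    case False
    then have k: "k \<ge> 1" by simp
    define C where "C = \<bar>fps_nth G 0\<bar>"
    have "exp 1 * \<bar>fps_nth G k\<bar> = \<bar>\<Sum>i<k. fps_nth G i * fps_nth Kf (k - i)\<bar>"
      using G_rec[OF k] by (metis abs_minus_cancel abs_mult abs_of_pos exp_gt_zero)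
    also have "\<dots> \<le> (\<Sum>i<k. \<bar>fps_nth G i\<bar> * \<bar>fps_nth Kf (k - i)\<bar>)"
      by (rule order_trans[OF sum_abs]) (simp add: abs_mult)
    also have "\<dots> \<le> (\<Sum>i<k. (C * (5/6) ^ i) * (exp 1 / fact (Suc (k - i))))"
    proof (rule sum_mono)
      fix i assume "i \<in> {..<k}"
      then have ik: "i < k" by simp
      show "\<bar>fps_nth G i\<bar> * \<bar>fps_nth Kf (k - i)\<bar> \<le> (C * (5/6) ^ i) * (exp 1 / fact (Suc (k - i)))"
        using less.IH[OF ik] Kf_bound[of "k - i"] ik unfolding C_def
        by (intro mult_mono) auto
    qed
    also have "\<dots> = exp 1 * (C * (\<Sum>i<k. (5/6::real) ^ i / fact (Suc (k - i))))"
      by (simp add: sum_distrib_left mult_ac)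
    also have "\<dots> \<le> exp 1 * (C * (5/6) ^ k)"
      using conv_sum[of k] unfolding C_def by (intro mult_left_mono) auto
    finally show ?thesis unfolding C_def by simp
  qed
qed


theorem mainTheorem6:
  shows "(\<forall>k. summable (\<lambda>n. (-1::real) ^ n * real (eulerian n k) / fact n)) \<and>
         (\<lambda>k. \<Sum>n. (-1::real) ^ n * real (eulerian n k) / fact n) \<longlonglongrightarrow> 0"
proof
  show "\<forall>k. summable (\<lambda>n. (-1::real) ^ n * real (eulerian n k) / fact n)"
    using a_sums sums_summable by blast
  have v: "(\<Sum>n. (-1::real) ^ n * real (eulerian n k) / fact n) = fps_nth G k" for k
    using sums_unique[OF a_sums[of k]] Aval_G[of k] by simp
  have lim: "(\<lambda>k. (5/6::real) ^ k) \<longlonglongrightarrow> 0"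
    by (rule LIMSEQ_power_zero) simp
  have ev: "\<forall>k. norm (fps_nth G k) \<le> norm ((5/6::real) ^ k) * \<bar>fps_nth G 0\<bar>"
  proof
    fix k
    have "norm ((5/6::real) ^ k) = (5/6) ^ k" by (simp add: norm_power)
    then show "norm (fps_nth G k) \<le> norm ((5/6::real) ^ k) * \<bar>fps_nth G 0\<bar>"
      using G_decay[of k] by (simp add: mult.commute)
  qed
  have "(\<lambda>k. fps_nth G k) \<longlonglongrightarrow> 0"
    by (rule tendsto_0_le[OF lim]) (rule always_eventually[OF ev])
  then show "(\<lambda>k. \<Sum>n. (-1::real) ^ n * real (eulerian n k) / fact n) \<longlonglongrightarrow> 0"
    unfolding v .
qed

end
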